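(* Let $G_n$ be a connected graph with $n$ nodes whose degrees satisfy $\max_i d_i/\min_i d_i\le C$ for some constant $C$. Then for every $\epsilon\in(0,1)$, $$t_{\mathrm{cov}}(1-\epsilon)\;\ge\;\frac{n}{2C}\log\big((1-\epsilon)n\big).$$
   Context: The averaging process on a finite, undirected, connected graph $G=(V,E)$, $V=\{1,\dots,n\}$: the state vector $v(t)\in\mathbb R^n$, $t=0,1,2,\dots$, starts from a given $v(0)$; at each step $t\ge 1$ an edge $\{i,j\}\in E$ is chosen uniformly at random (independently of all previous choices) and both $v_i$ and $v_j$ are replaced by $(v_i+v_j)/2$, all other coordinates unchanged. $d_i$ is the degree of vertex $i$. For $w\in\mathbb R^n$ let $n(w)=\#\{i:w_i\neq0\}$. For $\alpha\in(0,1]$ and a vertex $i$, $t_{\mathrm{cov}}(\alpha,i)$ is the expectation of the first time $t$ at which $n(v(t))\ge\alpha n$ for the process started at $v(0)=e_i$, and $t_{\mathrm{cov}}(\alpha)=\max_i t_{\mathrm{cov}}(\alpha,i)$. Logarithms are natural. *)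

theory Defs
  imports "HOL-Probability.Probability"
begin

definition simple_graph :: "nat \<Rightarrow> nat set set \<Rightarrow> bool" where
  "simple_graph n E \<longleftrightarrow> (\<forall>e\<in>E. e \<subseteq> {..<n} \<and> card e = 2)"

definition graph_connected :: "nat \<Rightarrow> nat set set \<Rightarrow> bool" where
  "graph_connected n E \<longleftrightarrow>
     (\<forall>i<n. \<forall>j<n. (i, j) \<in> {(a, b). {a, b} \<in> E}\<^sup>*)"

definition degree :: "nat set set \<Rightarrow> nat \<Rightarrow> nat" where
  "degree E i = card {e\<in>E. i \<in> e}"

definition avg_step :: "nat set \<Rightarrow> (nat \<Rightarrow> real) \<Rightarrow> (nat \<Rightarrow> real)" where
  "avg_step e v = (\<lambda>k. if k \<in> e then (\<Sum>j\<in>e. v j) / 2 else v k)"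

text \<open>State v(t) given the stream of chosen edges (edge chosen at step t+1 is w !! t).\<close>

fun avg_state :: "(nat \<Rightarrow> real) \<Rightarrow> nat set stream \<Rightarrow> nat \<Rightarrow> (nat \<Rightarrow> real)" where
  "avg_state v0 w 0 = v0"
| "avg_state v0 w (Suc t) = avg_step (w !! t) (avg_state v0 w t)"

definition nnz :: "nat \<Rightarrow> (nat \<Rightarrow> real) \<Rightarrow> nat" where
  "nnz n v = card {i\<in>{..<n}. v i \<noteq> 0}"

definition cov_time :: "nat \<Rightarrow> real \<Rightarrow> (nat \<Rightarrow> real) \<Rightarrow> nat set stream \<Rightarrow> ennreal" where
  "cov_time n \<alpha> v0 w =
     (if \<exists>t. real (nnz n (avg_state v0 w t)) \<ge> \<alpha> * real n
      then of_nat (LEAST t. real (nnz n (avg_state v0 w t)) \<ge> \<alpha> * real n)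
      else \<infinity>)"

definition edge_process :: "nat set set \<Rightarrow> nat set stream measure" where
  "edge_process E = stream_space (measure_pmf (pmf_of_set E))"

definition tcov_from :: "nat \<Rightarrow> nat set set \<Rightarrow> real \<Rightarrow> nat \<Rightarrow> ennreal" where
  "tcov_from n E \<alpha> i =
     (\<integral>\<^sup>+ w. cov_time n \<alpha> (\<lambda>k. if k = i then 1 else 0) w \<partial>edge_process E)"

definition tcov :: "nat \<Rightarrow> nat set set \<Rightarrow> real \<Rightarrow> ennreal" where
  "tcov n E \<alpha> = (SUP i\<in>{..<n}. tcov_from n E \<alpha> i)"

end

theory Submission
  imports Defs "HOL-Analysis.Harmonic_Numbers"
begin

definition cl :: "nat set set \<Rightarrow> nat set \<Rightarrow> nat set" where
  "cl E x = (if x \<in> E then x else (SOME e. e \<in> E))"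

fun trc :: "nat \<Rightarrow> real \<Rightarrow> nat set set \<Rightarrow> nat \<Rightarrow> (nat \<Rightarrow> real) \<Rightarrow> nat set stream \<Rightarrow> ennreal" where
  "trc n a E 0 v w = 0"
| "trc n a E (Suc N) v w = (if a * real n \<le> real (nnz n v) then 0
      else 1 + trc n a E N (avg_step (cl E (shd w)) v) (stl w))"

fun hvc :: "(nat \<Rightarrow> real) \<Rightarrow> nat \<Rightarrow> real \<Rightarrow> nat set set \<Rightarrow> nat \<Rightarrow> (nat \<Rightarrow> real) \<Rightarrow> nat set stream \<Rightarrow> ennreal" where
  "hvc h n a E 0 v w = ennreal (h (nnz n v))"
| "hvc h n a E (Suc N) v w = (if a * real n \<le> real (nnz n v) then ennreal (h (nnz n v))
      else hvc h n a E N (avg_step (cl E (shd w)) v) (stl w))"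

lemma cl_meas:
  assumes "E \<noteq> {}"
  shows "(\<lambda>w. cl E (shd w)) \<in> measurable (stream_space (measure_pmf p)) (count_space E)"
proof (rule measurable_compose[OF measurable_shd])
  have "cl E x \<in> E" for x using assms unfolding cl_def by (auto intro: someI_ex)
  then show "cl E \<in> measurable (measure_pmf p) (count_space E)" by auto
qed

lemma trc_meas:
  assumes "finite E" "E \<noteq> {}"
  shows "trc n a E N v \<in> borel_measurable (stream_space (measure_pmf p))"
proof (induction N arbitrary: v)
  case 0 then show ?case by simp
next
  case (Suc N)
  have "(\<lambda>w. trc n a E N (avg_step (cl E (shd w)) v) (stl w)) \<in> borel_measurable (stream_space (measure_pmf p))"
    by (rule measurable_compose_countable'[where f="\<lambda>x w. trc n a E N (avg_step x v) (stl w)"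
          and g="\<lambda>w. cl E (shd w)" and I=E])
      (auto intro: measurable_compose[OF measurable_stl Suc.IH] cl_meas[OF assms(2)] countable_finite[OF assms(1)])
  then show ?case by simp
qed

lemma hvc_meas:
  assumes "finite E" "E \<noteq> {}"
  shows "hvc h n a E N v \<in> borel_measurable (stream_space (measure_pmf p))"
proof (induction N arbitrary: v)
  case 0 then show ?case by simp
next
  case (Suc N)
  have "(\<lambda>w. hvc h n a E N (avg_step (cl E (shd w)) v) (stl w)) \<in> borel_measurable (stream_space (measure_pmf p))"
    by (rule measurable_compose_countable'[where f="\<lambda>x w. hvc h n a E N (avg_step x v) (stl w)"
          and g="\<lambda>w. cl E (shd w)" and I=E])
      (auto intro: measurable_compose[OF measurable_stl Suc.IH] cl_meas[OF assms(2)] countable_finite[OF assms(1)])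
  then show ?case by simp
qed

lemma main_ind:
  fixes h :: "nat \<Rightarrow> real"
  assumes fin: "finite E" "E \<noteq> {}"
    and hnn: "\<And>k. h k \<ge> 0"
    and step: "\<And>v. (\<integral>\<^sup>+x. ennreal (h (nnz n (avg_step (cl E x) v))) \<partial>measure_pmf (pmf_of_set E))
                 \<le> ennreal (h (nnz n v)) + 1"
  shows "(\<integral>\<^sup>+w. hvc h n a E N v w \<partial>stream_space (measure_pmf (pmf_of_set E)))
         \<le> ennreal (h (nnz n v)) + (\<integral>\<^sup>+w. trc n a E N v w \<partial>stream_space (measure_pmf (pmf_of_set E)))"
proof (induction N arbitrary: v)
  let ?M = "measure_pmf (pmf_of_set E)"
  let ?S = "stream_space ?M"
  interpret S: prob_space ?S by (rule prob_space.prob_space_stream_space) (rule prob_space_measure_pmf)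

  {
    case 0 then show ?case by (simp add: S.emeasure_space_1)
  next
    case (Suc N)
    show ?case
    proof (cases "a * real n \<le> real (nnz n v)")
      case True then show ?thesis by (simp add: S.emeasure_space_1)
    next
      case False
      have e1: "(\<integral>\<^sup>+w. hvc h n a E (Suc N) v w \<partial>?S)
          = (\<integral>\<^sup>+x. (\<integral>\<^sup>+w. hvc h n a E N (avg_step (cl E x) v) w \<partial>?S) \<partial>?M)"
        using prob_space.nn_integral_stream_space[OF prob_space_measure_pmf hvc_meas[OF fin, of h n a "Suc N" v]] False by simp
      have e2: "(\<integral>\<^sup>+w. trc n a E (Suc N) v w \<partial>?S)
          = (\<integral>\<^sup>+x. (\<integral>\<^sup>+w. 1 + trc n a E N (avg_step (cl E x) v) w \<partial>?S) \<partial>?M)"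
        using prob_space.nn_integral_stream_space[OF prob_space_measure_pmf trc_meas[OF fin, of n a "Suc N" v]] False by simp
      also have "\<dots> = (\<integral>\<^sup>+x. 1 + (\<integral>\<^sup>+w. trc n a E N (avg_step (cl E x) v) w \<partial>?S) \<partial>?M)"
        by (subst nn_integral_add) (auto intro: trc_meas[OF fin] simp: S.emeasure_space_1)
      also have "\<dots> = 1 + (\<integral>\<^sup>+x. (\<integral>\<^sup>+w. trc n a E N (avg_step (cl E x) v) w \<partial>?S) \<partial>?M)"
        by (subst nn_integral_add) auto
      finally have e2': "(\<integral>\<^sup>+w. trc n a E (Suc N) v w \<partial>?S) = 1 + (\<integral>\<^sup>+x. (\<integral>\<^sup>+w. trc n a E N (avg_step (cl E x) v) w \<partial>?S) \<partial>?M)" .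
      have "(\<integral>\<^sup>+w. hvc h n a E (Suc N) v w \<partial>?S)
          \<le> (\<integral>\<^sup>+x. ennreal (h (nnz n (avg_step (cl E x) v))) + (\<integral>\<^sup>+w. trc n a E N (avg_step (cl E x) v) w \<partial>?S) \<partial>?M)"
        unfolding e1 by (rule nn_integral_mono) (rule Suc.IH)
      also have "\<dots> = (\<integral>\<^sup>+x. ennreal (h (nnz n (avg_step (cl E x) v))) \<partial>?M) + (\<integral>\<^sup>+x. (\<integral>\<^sup>+w. trc n a E N (avg_step (cl E x) v) w \<partial>?S) \<partial>?M)"
        by (subst nn_integral_add) auto
      also have "\<dots> \<le> ennreal (h (nnz n v)) + 1 + (\<integral>\<^sup>+x. (\<integral>\<^sup>+w. trc n a E N (avg_step (cl E x) v) w \<partial>?S) \<partial>?M)"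
        using step[of v] by (rule add_right_mono)
      also have "\<dots> = ennreal (h (nnz n v)) + (\<integral>\<^sup>+w. trc n a E (Suc N) v w \<partial>?S)"
        unfolding e2' by (simp add: add.assoc)
      finally show ?thesis .
    qed
  }
qed

lemma nnz_step:
  assumes "x \<subseteq> {..<n}" "card x = 2"
  shows "nnz n (avg_step x v) \<le> card {i\<in>{..<n}. v i \<noteq> 0}
     + (if x \<inter> {i\<in>{..<n}. v i \<noteq> 0} \<noteq> {} \<and> \<not> x \<subseteq> {i\<in>{..<n}. v i \<noteq> 0} then 1 else 0)"
proof -
  define S where "S = {i\<in>{..<n}. v i \<noteq> 0}"
  have finx: "finite x" using assms(2) by (metis card.infinite zero_neq_numeral)
  have finS: "finite S" unfolding S_def by auto
  let ?S' = "{i\<in>{..<n}. avg_step x v i \<noteq> 0}"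
  show ?thesis
  proof (cases "x \<inter> S = {}")
    case True
    then have "\<forall>j\<in>x. v j = 0" using assms(1) unfolding S_def by blast
    then have "?S' \<subseteq> S" unfolding S_def avg_step_def by auto
    then have "card ?S' \<le> card S" using finS by (rule card_mono[rotated])
    then show ?thesis unfolding nnz_def S_def[symmetric] by simp
  next
    case False
    have "?S' \<subseteq> S \<union> (x - S)" unfolding S_def avg_step_def using assms(1) by auto
    then have "card ?S' \<le> card (S \<union> (x - S))" using finS finx by (intro card_mono) auto
    also have "\<dots> = card S + card (x - S)" using finS finx by (intro card_Un_disjoint) auto
    finally have c1: "card ?S' \<le> card S + card (x - S)" .
    show ?thesis
    proof (cases "x \<subseteq> S")
      case True
      then have "card (x - S) = 0" by (metis Diff_eq_empty_iff card.empty)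
      then have "card ?S' \<le> card S" using c1 by linarith
      then show ?thesis unfolding nnz_def S_def[symmetric] by simp
    next
      case nsub: False
      have "x - S \<subset> x" using False by auto
      then have "card (x - S) < card x" using finx by (simp add: psubset_card_mono)
      then show ?thesis using c1 False nsub assms(2) unfolding nnz_def S_def[symmetric] by simp
    qed
  qed
qed

lemma handshake:
  assumes "simple_graph n E"
  shows "(\<Sum>i<n. degree E i) = 2 * card E"
proof -
  have finE: "finite E"
    using assms unfolding simple_graph_def
    by (meson finite_Pow_iff finite_lessThan finite_subset PowI subsetI)
  have "(\<Sum>i<n. degree E i) = (\<Sum>i<n. \<Sum>e\<in>E. if i \<in> e then 1 else 0)"
    unfolding degree_def using finE by (simp add: sum.inter_filter[symmetric])
  also have "\<dots> = (\<Sum>e\<in>E. \<Sum>i<n. if i \<in> e then 1 else 0)" by (rule sum.swap)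
  also have "\<dots> = (\<Sum>e\<in>E. 2)"
  proof (rule sum.cong)
    fix e assume "e \<in> E"
    then have "e \<subseteq> {..<n}" "card e = 2" using assms unfolding simple_graph_def by auto
    then have "{i\<in>{..<n}. i \<in> e} = e" by auto
    then show "(\<Sum>i<n. if i \<in> e then 1 else 0) = (2::nat)"
      using \<open>card e = 2\<close> by (simp add: sum.inter_filter[symmetric])
  qed simp
  finally show ?thesis by simp
qed

lemma avg_state_Suc: "avg_state v w (Suc t) = avg_state (avg_step (shd w) v) (stl w) t"
  by (induction t) auto

lemma cov_time_step:
  assumes "\<not> a * real n \<le> real (nnz n v)"
  shows "cov_time n a v w = 1 + cov_time n a (avg_step (shd w) v) (stl w)"
proof -
  define P where "P t = (a * real n \<le> real (nnz n (avg_state v w t)))" for t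
  define Q where "Q t = (a * real n \<le> real (nnz n (avg_state (avg_step (shd w) v) (stl w) t)))" for t
  have P0: "\<not> P 0" using assms unfolding P_def by simp
  have PQ: "P (Suc t) = Q t" for t unfolding P_def Q_def avg_state_Suc ..
  have ex: "(\<exists>t. P t) = (\<exists>t. Q t)" using P0 PQ by (metis not0_implies_Suc)
  show ?thesis
  proof (cases "\<exists>t. Q t")
    case True
    then obtain t where "P t" using ex by blast
    then have "(LEAST t. P t) = Suc (LEAST t. Q t)" using Least_Suc[of P t] P0 PQ by simp
    then show ?thesis using True ex unfolding cov_time_def P_def[symmetric] Q_def[symmetric]
      by (simp add: of_nat_Suc add.commute)
  next
    case False
    then show ?thesis using ex unfolding cov_time_def P_def[symmetric] Q_def[symmetric] by simp
  qed
qed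

lemma trc_le_cov:
  assumes "\<forall>i. w !! i \<in> E"
  shows "trc n a E N v w \<le> cov_time n a v w"
  using assms
proof (induction N arbitrary: v w)
  case 0 then show ?case by simp
next
  case (Suc N)
  show ?case
  proof (cases "a * real n \<le> real (nnz n v)")
    case True then show ?thesis by simp
  next
    case False
    have "shd w \<in> E" using Suc.prems[rule_format, of 0] by simp
    then have cl: "cl E (shd w) = shd w" unfolding cl_def by simp
    have "\<forall>i. stl w !! i \<in> E" using Suc.prems by (metis snth.simps(2))
    then have "trc n a E N (avg_step (shd w) v) (stl w) \<le> cov_time n a (avg_step (shd w) v) (stl w)"
      by (rule Suc.IH)
    then show ?thesis using False cl cov_time_step[OF False, of w] by (simp add: add_left_mono)
  qed
qed

lemma pointwise:
  assumes "\<And>k. a * real n \<le> real k \<Longrightarrow> c \<le> h k"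
  shows "ennreal c \<le> hvc h n a E N v w \<or> trc n a E N v w = of_nat N"
proof (induction N arbitrary: v w)
  case 0 then show ?case by simp
next
  case (Suc N)
  show ?case
  proof (cases "a * real n \<le> real (nnz n v)")
    case True then show ?thesis using assms by (simp add: ennreal_leI)
  next
    case False
    then show ?thesis using Suc.IH[of "avg_step (cl E (shd w)) v" "stl w"]
      by (auto simp: of_nat_Suc add.commute)
  qed
qed

lemma one_step:
  assumes sg: "simple_graph n E" and finE: "finite E" and ne: "E \<noteq> {}"
    and K: "K \<ge> 0"
    and bound: "\<And>i. i < n \<Longrightarrow> real (degree E i) * K \<le> real (card E)"
  shows "(\<integral>\<^sup>+x. ennreal (K * harm (nnz n (avg_step (cl E x) v) - 1)) \<partial>measure_pmf (pmf_of_set E))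
     \<le> ennreal (K * harm (nnz n v - 1)) + 1"
proof -
  define h where "h k = K * harm (k - 1)" for k :: nat
  define S where "S = {i\<in>{..<n}. v i \<noteq> 0}"
  define k where "k = card S"
  define B where "B = {e\<in>E. e \<inter> S \<noteq> {} \<and> \<not> e \<subseteq> S}"
  have finS: "finite S" unfolding S_def by auto
  have kdef: "nnz n v = k" unfolding k_def S_def nnz_def ..
  have hnn: "h j \<ge> 0" for j unfolding h_def using K by (simp add: harm_nonneg)
  have hmono: "i \<le> j \<Longrightarrow> h i \<le> h j" for i j
    unfolding h_def using K by (intro mult_left_mono harm_mono) auto
  have hsuc: "1 \<le> j \<Longrightarrow> h (Suc j) = h j + K / j" for j
  proof -
    assume j: "1 \<le> j"
    have "harm j = (harm (j - 1) :: real) + 1 / real j"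
      using harm_Suc[of "j - 1"] j by (simp add: inverse_eq_divide)
    then show ?thesis unfolding h_def by (simp add: distrib_left)
  qed
  have edge: "h (nnz n (avg_step x v)) \<le> h k + (if x \<in> B then K / k else 0)" if "x \<in> E" for x
  proof -
    have x: "x \<subseteq> {..<n}" "card x = 2" using sg that unfolding simple_graph_def by auto
    have nn: "nnz n (avg_step x v) \<le> k + (if x \<in> B then 1 else 0)"
      using nnz_step[OF x, of v] that unfolding B_def k_def S_def by simp
    show ?thesis
    proof (cases "x \<in> B")
      case True
      then have "S \<noteq> {}" unfolding B_def by auto
      then have "k \<ge> 1" unfolding k_def using finS by (simp add: Suc_leI card_gt_0_iff)
      then show ?thesis using True nn hmono[of "nnz n (avg_step x v)" "Suc k"] hsuc[of k] by simp
    next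
      case False
      then show ?thesis using nn hmono[of "nnz n (avg_step x v)" k] by simp
    qed
  qed
  have Bsub: "B \<subseteq> (\<Union>a\<in>S. {e\<in>E. a \<in> e})" unfolding B_def by auto
  have "card B \<le> card (\<Union>a\<in>S. {e\<in>E. a \<in> e})"
    by (rule card_mono[OF _ Bsub]) (simp add: finS finE)
  also have "\<dots> \<le> (\<Sum>a\<in>S. card {e\<in>E. a \<in> e})" using finS by (rule card_UN_le)
  finally have cB: "card B \<le> (\<Sum>a\<in>S. degree E a)" unfolding degree_def .
  have "real (card B) * K \<le> (\<Sum>a\<in>S. real (degree E a)) * K"
  proof (rule mult_right_mono[OF _ K])
    show "real (card B) \<le> (\<Sum>a\<in>S. real (degree E a))"
      using cB by (metis of_nat_le_iff of_nat_sum)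
  qed
  also have "\<dots> = (\<Sum>a\<in>S. real (degree E a) * K)" by (simp add: sum_distrib_right)
  also have "\<dots> \<le> (\<Sum>a\<in>S. real (card E))"
    by (intro sum_mono bound) (auto simp: S_def)
  also have "\<dots> = k * real (card E)" unfolding k_def by simp
  finally have cBK: "real (card B) * K \<le> k * real (card E)" .
  have cBK2: "real (card B) * (K / k) \<le> real (card E)"
  proof (cases "k = 0")
    case True then show ?thesis by simp
  next
    case False
    then show ?thesis using cBK by (simp add: field_simps)
  qed
  have BE: "B \<subseteq> E" unfolding B_def by auto
  have sif: "(\<Sum>x\<in>E. if x \<in> B then K / k else 0) = card B * (K / k)"
    using finE BE by (simp add: sum.If_cases Int_absorb1)
  have "(\<Sum>x\<in>E. h (nnz n (avg_step x v))) \<le> (\<Sum>x\<in>E. h k + (if x \<in> B then K / k else 0))"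
    by (intro sum_mono edge)
  also have "\<dots> = card E * h k + card B * (K / k)"
    by (simp only: sum.distrib sif) simp
  also have "\<dots> \<le> card E * h k + card E" using cBK2 by linarith
  finally have sumb: "(\<Sum>x\<in>E. h (nnz n (avg_step x v))) \<le> card E * (h k + 1)"
    by (simp add: distrib_left)
  have cE: "card E > 0" using finE ne by (simp add: card_gt_0_iff)
  have "(\<integral>\<^sup>+x. ennreal (h (nnz n (avg_step (cl E x) v))) \<partial>measure_pmf (pmf_of_set E))
      = (\<Sum>x\<in>E. ennreal (h (nnz n (avg_step (cl E x) v)))) / card E"
    by (rule nn_integral_pmf_of_set[OF ne finE])
  also have "\<dots> = (\<Sum>x\<in>E. ennreal (h (nnz n (avg_step x v)))) / card E"
    by (intro arg_cong2[where f="(/)"] sum.cong) (auto simp: cl_def)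
  also have "\<dots> = ennreal ((\<Sum>x\<in>E. h (nnz n (avg_step x v))) / card E)"
    using hnn cE by (simp add: sum_ennreal divide_ennreal sum_nonneg ennreal_of_nat_eq_real_of_nat)
  also have "\<dots> \<le> ennreal (h k + 1)"
    using sumb cE by (intro ennreal_leI) (simp add: field_simps)
  also have "\<dots> = ennreal (h k) + 1" using hnn by (simp add: ennreal_plus)
  finally show ?thesis unfolding h_def kdef .
qed

lemma final_real:
  fixes c t :: real
  assumes t: "t \<ge> 0" and H: "\<And>N::nat. N \<ge> (1::nat) \<Longrightarrow> c \<le> t + c / real N * t"
  shows "c \<le> t"
proof (rule ccontr)
  assume "\<not> c \<le> t"
  then have ct: "c > t" by simp
  obtain N :: nat where N: "N > c * t / (c - t)" using reals_Archimedean2 by blast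
  have "c * t / (c - t) \<ge> 0" using ct t by simp
  then have N1: "N \<ge> 1" using N by linarith
  have "c * t < N * (c - t)" using N ct by (simp add: field_simps)
  then have "c / N * t < c - t" using N1 by (simp add: field_simps)
  then show False using H[OF N1] by linarith
qed

theorem proposition4:
  fixes n :: nat and E :: "nat set set" and C \<epsilon> :: real
  assumes "n \<ge> 2"
    and "simple_graph n E"
    and "graph_connected n E"
    and "real (Max (degree E ` {..<n})) / real (Min (degree E ` {..<n})) \<le> C"
    and "0 < \<epsilon>" and "\<epsilon> < 1"
  shows "ennreal (real n / (2 * C) * ln ((1 - \<epsilon>) * real n)) \<le> tcov n E (1 - \<epsilon>)"
proof -
  note n2 = assms(1) and sg = assms(2) and conn = assms(3) and rat = assms(4)
  define a where "a = 1 - \<epsilon>"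
  define dmax where "dmax = Max (degree E ` {..<n})"
  define dmin where "dmin = Min (degree E ` {..<n})"
  have a0: "a > 0" using assms(6) unfolding a_def by simp
  have finE: "finite E"
    using sg unfolding simple_graph_def
    by (meson finite_Pow_iff finite_lessThan finite_subset PowI subsetI)
  have deg1: "degree E i \<ge> 1" if i: "i < n" for i
  proof -
    define j where "j = (if i = 0 then 1 else 0::nat)"
    have j: "j < n" "j \<noteq> i" unfolding j_def using n2 by auto
    have "(i, j) \<in> {(a, b). {a, b} \<in> E}\<^sup>*" using conn i j unfolding graph_connected_def by blast
    then obtain y where "(i, y) \<in> {(a, b). {a, b} \<in> E}"
      using j(2) by (metis converse_rtranclE)
    then have "{i, y} \<in> {e\<in>E. i \<in> e}" by auto
    then have "{e\<in>E. i \<in> e} \<noteq> {}" by blast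
    then show ?thesis unfolding degree_def using finE by (simp add: Suc_leI card_gt_0_iff)
  qed
  have ne: "E \<noteq> {}" using deg1[of 0] n2 unfolding degree_def by (auto simp: card_gt_0_iff)
  have "0 \<in> {..<n}" using n2 by simp
  then have imne: "degree E ` {..<n} \<noteq> {}" by blast
  have dmin1: "dmin \<ge> 1" unfolding dmin_def using imne deg1 by (auto simp: Min_ge_iff)
  have dminle: "dmin \<le> degree E i" if "i < n" for i unfolding dmin_def using that by (intro Min_le) auto
  have dmaxge: "degree E i \<le> dmax" if "i < n" for i unfolding dmax_def using that by (intro Max_ge) auto
  have dmm: "dmin \<le> dmax" using dminle[of 0] dmaxge[of 0] n2 by simp
  have dmaxC: "real dmax \<le> C * real dmin"
    using rat dmin1 unfolding dmax_def[symmetric] dmin_def[symmetric] by (simp add: field_simps)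
  have "real dmin \<le> real dmax" using dmm by simp
  then have "1 * real dmin \<le> C * real dmin" using dmaxC by simp
  moreover have "real dmin > 0" using dmin1 by simp
  ultimately have C1: "C \<ge> 1" by (meson mult_le_cancel_right_pos)
  define K where "K = real n / (2 * C)"
  have K0: "K \<ge> 0" unfolding K_def using C1 by simp
  have hs: "(\<Sum>i<n. degree E i) = 2 * card E" by (rule handshake[OF sg])
  have "n * dmin \<le> (\<Sum>i<n. degree E i)"
    using sum_mono[of "{..<n}" "\<lambda>_. dmin" "degree E"] dminle by simp
  then have ndmin: "real n * real dmin \<le> 2 * real (card E)" using hs
    by (metis of_nat_le_iff of_nat_mult of_nat_numeral)
  have bound: "real (degree E i) * K \<le> real (card E)" if "i < n" for i
  proof -
    have "real (degree E i) * K \<le> real dmax * K" using dmaxge[OF that] K0 by (intro mult_right_mono) auto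
    also have "\<dots> \<le> C * real dmin * K" using dmaxC K0 by (intro mult_right_mono) auto
    also have "\<dots> = real n * real dmin / 2" unfolding K_def using C1 by (simp add: field_simps)
    also have "\<dots> \<le> real (card E)" using ndmin by simp
    finally show ?thesis .
  qed
  define h where "h k = K * harm (k - 1)" for k :: nat
  have hnn: "h k \<ge> 0" for k unfolding h_def using K0 by (simp add: harm_nonneg)
  have step: "(\<integral>\<^sup>+x. ennreal (h (nnz n (avg_step (cl E x) v))) \<partial>measure_pmf (pmf_of_set E))
                 \<le> ennreal (h (nnz n v)) + 1" for v
    unfolding h_def by (rule one_step[OF sg finE ne K0 bound])
  define c where "c = K * ln (a * real n)"
  have hc: "c \<le> h k" if "a * real n \<le> real k" for k
  proof -
    have "a * real n > 0" using a0 n2 by simp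
    then have "real k > 0" using that by linarith
    then have k1: "k \<ge> 1" by simp
    have "ln (a * real n) \<le> ln (real k)" using that a0 n2 by (intro ln_mono) auto
    also have "\<dots> = ln (real (k - 1) + 1)" using k1 by (simp add: of_nat_diff)
    also have "\<dots> \<le> harm (k - 1)" by (rule ln_le_harm)
    finally show ?thesis unfolding c_def h_def using K0 by (intro mult_left_mono)
  qed
  define v0 where "v0 = (\<lambda>k::nat. if k = 0 then 1 else (0::real))"
  have "{i\<in>{..<n}. v0 i \<noteq> 0} = {0}" unfolding v0_def using n2 by auto
  then have nnz0: "nnz n v0 = 1" unfolding nnz_def by simp
  have h1: "h (nnz n v0) = 0" unfolding nnz0 h_def by (simp add: harm_def)
  let ?M = "measure_pmf (pmf_of_set E)"
  let ?S = "stream_space ?M"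
  interpret S: prob_space ?S by (rule prob_space.prob_space_stream_space) (rule prob_space_measure_pmf)
  define T where "T = tcov_from n E a 0"
  have T_def': "T = (\<integral>\<^sup>+w. cov_time n a v0 w \<partial>?S)"
    unfolding T_def tcov_from_def edge_process_def v0_def ..
  have AE: "AE w in ?S. \<forall>i. w !! i \<in> E"
  proof -
    have "AE w in ?S. stream_all (\<lambda>x. x \<in> E) w"
      by (rule prob_space.AE_stream_all[OF prob_space_measure_pmf])
        (auto simp: AE_measure_pmf_iff ne finE)
    then show ?thesis by eventually_elim (auto simp: stream.pred_set snth_sset)
  qed
  have trT: "(\<integral>\<^sup>+w. trc n a E N v0 w \<partial>?S) \<le> T" for N
    unfolding T_def' by (rule nn_integral_mono_AE) (use AE in eventually_elim, auto intro: trc_le_cov)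
  have key: "ennreal c \<le> T + ennreal (c / N) * T" if N1: "N \<ge> 1" for N :: nat
  proof -
    have pw: "ennreal c \<le> hvc h n a E N v0 w + ennreal (c / N) * trc n a E N v0 w" for w
    proof -
      from pointwise[of a n c h, OF hc] consider "ennreal c \<le> hvc h n a E N v0 w" | "trc n a E N v0 w = of_nat N"
        by blast
      then show ?thesis
      proof cases
        case 1 then show ?thesis by (simp add: add_increasing2)
      next
        case 2
        have "ennreal c = ennreal (c / N) * of_nat N"
        proof (cases "c \<ge> 0")
          case True
          then show ?thesis using N1 by (simp add: ennreal_of_nat_eq_real_of_nat ennreal_mult[symmetric])
        next
          case False then show ?thesis by (simp add: ennreal_neg divide_nonpos_nonneg)
        qed
        then show ?thesis using 2 by (simp add: add_increasing)
      qed
    qed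
    have "ennreal c = (\<integral>\<^sup>+w. ennreal c \<partial>?S)" by (simp add: S.emeasure_space_1)
    also have "\<dots> \<le> (\<integral>\<^sup>+w. hvc h n a E N v0 w + ennreal (c / N) * trc n a E N v0 w \<partial>?S)"
      by (rule nn_integral_mono) (rule pw)
    also have "\<dots> = (\<integral>\<^sup>+w. hvc h n a E N v0 w \<partial>?S) + ennreal (c / N) * (\<integral>\<^sup>+w. trc n a E N v0 w \<partial>?S)"
      by (subst nn_integral_add)
        (auto simp: nn_integral_cmult hvc_meas[OF finE ne] trc_meas[OF finE ne]
          intro!: borel_measurable_times_ennreal trc_meas[OF finE ne])
    also have "\<dots> \<le> (ennreal (h (nnz n v0)) + (\<integral>\<^sup>+w. trc n a E N v0 w \<partial>?S)) + ennreal (c / N) * (\<integral>\<^sup>+w. trc n a E N v0 w \<partial>?S)"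
      by (intro add_right_mono main_ind[OF finE ne hnn step])
    also have "\<dots> \<le> T + ennreal (c / N) * T"
      unfolding h1 using trT[of N] by (simp add: add_mono mult_left_mono)
    finally show ?thesis .
  qed
  have cT: "ennreal c \<le> T"
  proof (cases "c \<le> 0")
    case True then show ?thesis by (simp add: ennreal_neg)
  next
    case cpos: False
    show ?thesis
    proof (cases T)
      case (real t)
      have "c \<le> t"
      proof (rule final_real)
        show "t \<ge> 0" by fact
        fix N :: nat assume N1: "N \<ge> 1"
        have cN: "c / N \<ge> 0" using cpos by simp
        have t0: "t \<ge> 0" by fact
        have ct0: "0 \<le> c / N * t" by (rule mult_nonneg_nonneg[OF cN t0])
        then have "ennreal (t + c / N * t) = ennreal t + ennreal (c / N * t)"
          using t0 by (intro ennreal_plus) auto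
        also have "ennreal (c / N * t) = ennreal (c / N) * ennreal t"
          using t0 cN by (intro ennreal_mult) auto
        finally have "ennreal (t + c / N * t) = ennreal t + ennreal (c / N) * ennreal t" .
        then have "ennreal c \<le> ennreal (t + c / N * t)"
          using key[OF N1] \<open>T = ennreal t\<close> by simp
        moreover have nn: "0 \<le> t + c / N * t" using ct0 t0 by linarith
        ultimately show "c \<le> t + c / N * t" using ennreal_le_iff[OF nn] by blast
      qed
      then show ?thesis using real by (simp add: ennreal_leI)
    next
      case top then show ?thesis by simp
    qed
  qed
  have "T \<le> tcov n E a" unfolding tcov_def T_def using n2 by (intro SUP_upper) auto
  then show ?thesis using cT unfolding c_def K_def a_def by simp
qed

end
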